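(* Assume the loss $f(\cdot,z)$ is $\beta$-smooth for all $z\in\mathcal{Z}$, and consider full-batch GD with $T$ iterations and learning rates satisfying $\eta_t\le C/t\le1/\beta$ for all $t\le T+1$, with $\epsilon=\beta C<1$. Then $$|\epsilon_{\mathrm{gen}}|\le\left(\frac{8\sqrt3}{n}\sqrt{\log(eT)}\,(eT)^{\epsilon}+\frac{48}{n^2}\log(eT)\,(eT)^{2\epsilon}\right)\mathbb{E}[R_S(W_1)].$$
   Context: Let $\mathcal{D}$ be a distribution on $\mathcal{Z}$ and $z_1,\dots,z_n$ i.i.d. from $\mathcal{D}$; $S=(z_1,\dots,z_n)$. The loss $f:\mathbb{R}^d\times\mathcal{Z}\to[0,\infty)$ is non-negative and $\beta$-smooth ($\|\nabla f(w,z)-\nabla f(u,z)\|_2\le\beta\|w-u\|_2$), possibly nonconvex. $R(w)=\mathbb{E}_{Z\sim\mathcal{D}}[f(w,Z)]$, $R_S(w)=\frac1n\sum_j f(w,z_j)$. Full-batch GD: from a fixed initial point $W_1$, $W_{t+1}=W_t-\frac{\eta_t}{n}\sum_{j=1}^n\nabla f(W_t,z_j)$, $t=1,\dots,T$, output $A(S)=W_{T+1}$. Generalization error $\epsilon_{\mathrm{gen}}=\mathbb{E}[R(A(S))-R_S(A(S))]$. *)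

theory Defs
  imports "HOL-Probability.Probability"
begin

text \<open>Full-batch gradient descent. gd eta G n W1 S k is the iterate W_(k+1):
  gd ... 0 = W_1 and W_(t+1) = W_t - (eta t / n) * sum_j G W_t (S j), for t = k+1.
  G w z is the gradient of f(., z) at w.\<close>
primrec gd :: "(nat \<Rightarrow> real) \<Rightarrow> ('w::real_vector \<Rightarrow> 'z \<Rightarrow> 'w) \<Rightarrow> nat \<Rightarrow> 'w \<Rightarrow> (nat \<Rightarrow> 'z) \<Rightarrow> nat \<Rightarrow> 'w"
where
  "gd eta G n W1 S 0 = W1"
| "gd eta G n W1 S (Suc k) =
     gd eta G n W1 S k - (eta (Suc k) / real n) *\<^sub>R (\<Sum>j<n. G (gd eta G n W1 S k) (S j))"

definition pop_risk :: "'z measure \<Rightarrow> ('w \<Rightarrow> 'z \<Rightarrow> real) \<Rightarrow> 'w \<Rightarrow> real" where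
  "pop_risk D f w = (\<integral>z. f w z \<partial>D)"

definition emp_risk :: "nat \<Rightarrow> ('w \<Rightarrow> 'z \<Rightarrow> real) \<Rightarrow> (nat \<Rightarrow> 'z) \<Rightarrow> 'w \<Rightarrow> real" where
  "emp_risk n f S w = (\<Sum>j<n. f w (S j)) / real n"

definition sample_measure :: "'z measure \<Rightarrow> nat \<Rightarrow> (nat \<Rightarrow> 'z) measure" where
  "sample_measure D n = PiM {..<n} (\<lambda>_. D)"

end

theory Submission
  imports Defs
begin

lemma taylor_bounds:
  fixes F :: "'w::real_inner \<Rightarrow> real" and g :: "'w \<Rightarrow> 'w"
  assumes deriv: "\<And>w. (F has_derivative (\<lambda>h. g w \<bullet> h)) (at w)"
    and lip: "\<And>w u. norm (g w - g u) \<le> b * norm (w - u)"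
  shows "\<bar>F y - F x - g x \<bullet> (y - x)\<bar> \<le> b / 2 * (norm (y - x))\<^sup>2"
proof -
  define h where "h = y - x"
  have D: "((\<lambda>t. F (x + t *\<^sub>R h)) has_real_derivative (g (x + t *\<^sub>R h) \<bullet> h)) (at t)" for t
  proof -
    have "((\<lambda>t. F (x + t *\<^sub>R h)) has_derivative (\<lambda>s. g (x + t *\<^sub>R h) \<bullet> (s *\<^sub>R h))) (at t)"
      by (rule has_derivative_compose[OF _ deriv]) (auto intro!: derivative_eq_intros)
    moreover have "(\<lambda>s. g (x + t *\<^sub>R h) \<bullet> (s *\<^sub>R h)) = (*) (g (x + t *\<^sub>R h) \<bullet> h)"
      by (auto simp: inner_scaleR_right mult.commute)
    ultimately show ?thesis by (simp add: has_field_derivative_def)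
  qed
  have gd: "\<bar>g (x + t *\<^sub>R h) \<bullet> h - g x \<bullet> h\<bar> \<le> b * t * (norm h)\<^sup>2" if "0 \<le> t" for t
  proof -
    have "\<bar>g (x + t *\<^sub>R h) \<bullet> h - g x \<bullet> h\<bar> = \<bar>(g (x + t *\<^sub>R h) - g x) \<bullet> h\<bar>"
      by (simp add: inner_diff_left)
    also have "\<dots> \<le> norm (g (x + t *\<^sub>R h) - g x) * norm h" by (rule Cauchy_Schwarz_ineq2)
    also have "\<dots> \<le> b * norm (t *\<^sub>R h) * norm h"
      using lip[of "x + t *\<^sub>R h" x] by (intro mult_right_mono) auto
    finally show ?thesis using that by (simp add: power2_eq_square)
  qed
  define \<psi>1 where "\<psi>1 t = F (x + t *\<^sub>R h) - t * (g x \<bullet> h) - b / 2 * t\<^sup>2 * (norm h)\<^sup>2" for t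
  define \<psi>2 where "\<psi>2 t = F (x + t *\<^sub>R h) - t * (g x \<bullet> h) + b / 2 * t\<^sup>2 * (norm h)\<^sup>2" for t
  have "\<psi>1 1 \<le> \<psi>1 0"
  proof (rule DERIV_nonpos_imp_nonincreasing[of 0 1])
    fix t :: real assume t: "0 \<le> t" "t \<le> 1"
    show "\<exists>y. (\<psi>1 has_real_derivative y) (at t) \<and> y \<le> 0"
      unfolding \<psi>1_def
      by (rule exI, rule conjI, (rule derivative_eq_intros D refl)+)
         (use gd[OF t(1)] in \<open>auto simp: abs_le_iff mult.commute mult.left_commute\<close>)
  qed simp
  moreover have "\<psi>2 0 \<le> \<psi>2 1"
  proof (rule DERIV_nonneg_imp_nondecreasing[of 0 1])
    fix t :: real assume t: "0 \<le> t" "t \<le> 1"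
    show "\<exists>y. (\<psi>2 has_real_derivative y) (at t) \<and> 0 \<le> y"
      unfolding \<psi>2_def
      by (rule exI, rule conjI, (rule derivative_eq_intros D refl)+)
         (use gd[OF t(1)] in \<open>auto simp: abs_le_iff mult.commute mult.left_commute\<close>)
  qed simp
  ultimately have "F y - F x - g x \<bullet> (y - x) \<le> b / 2 * (norm (y - x))\<^sup>2"
      "- (b / 2 * (norm (y - x))\<^sup>2) \<le> F y - F x - g x \<bullet> (y - x)"
    unfolding \<psi>1_def \<psi>2_def h_def by simp_all
  then show ?thesis by (simp only: abs_le_iff) auto
qed

lemma self_bound:
  fixes F :: "'w::real_inner \<Rightarrow> real" and g :: "'w \<Rightarrow> 'w"
  assumes up: "\<And>y. F y \<le> F x + g x \<bullet> (y - x) + b / 2 * (norm (y - x))\<^sup>2"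
    and nn: "\<And>y. 0 \<le> F y" and b: "b > 0"
  shows "(norm (g x))\<^sup>2 \<le> 2 * b * F x"
proof -
  have "0 \<le> F (x - (1 / b) *\<^sub>R g x)" by (rule nn)
  also have "\<dots> \<le> F x + g x \<bullet> (- ((1 / b) *\<^sub>R g x)) + b / 2 * (norm (- ((1 / b) *\<^sub>R g x)))\<^sup>2"
    using up[of "x - (1 / b) *\<^sub>R g x"] by simp
  also have "g x \<bullet> (- ((1 / b) *\<^sub>R g x)) = - (1 / b) * (norm (g x))\<^sup>2"
    by (simp add: power2_norm_eq_inner)
  also have "(norm (- ((1 / b) *\<^sub>R g x)))\<^sup>2 = (1 / b)\<^sup>2 * (norm (g x))\<^sup>2"
    using b by (simp add: power_mult_distrib power_divide)
  also have "F x + - (1 / b) * (norm (g x))\<^sup>2 + b / 2 * ((1 / b)\<^sup>2 * (norm (g x))\<^sup>2) = F x - (norm (g x))\<^sup>2 / (2 * b)"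
    using b by (simp add: field_simps power2_eq_square)
  finally show ?thesis using b by (simp add: field_simps)
qed

locale gdset =
  fixes D :: "'z measure"
    and f :: "'w::euclidean_space \<Rightarrow> 'z \<Rightarrow> real"
    and G :: "'w \<Rightarrow> 'z \<Rightarrow> 'w"
    and eta :: "nat \<Rightarrow> real"
    and W1 :: 'w
    and beta C :: real
    and n T :: nat
  assumes D: "prob_space D"
    and f_meas: "\<And>w. (\<lambda>z. f w z) \<in> borel_measurable D"
    and f_nonneg: "\<And>w z. f w z \<ge> 0"
    and grad: "\<And>w z. ((\<lambda>v. f v z) has_derivative (\<lambda>h. G w z \<bullet> h)) (at w)"
    and smooth: "\<And>w u z. norm (G w z - G u z) \<le> beta * norm (w - u)"
    and beta_pos: "beta > 0"
    and n_pos: "n > 0"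
    and T_pos: "T \<ge> 1"
    and eta_nonneg: "\<And>t. 1 \<le> t \<Longrightarrow> t \<le> T + 1 \<Longrightarrow> 0 \<le> eta t"
    and eta_le: "\<And>t. 1 \<le> t \<Longrightarrow> t \<le> T + 1 \<Longrightarrow> eta t \<le> C / real t"
    and C_le: "\<And>t. 1 \<le> t \<Longrightarrow> t \<le> T + 1 \<Longrightarrow> C / real t \<le> 1 / beta"
    and eps: "beta * C < 1"
    and integrable_init: "integrable D (\<lambda>z. f W1 z)"
begin

abbreviation W :: "(nat \<Rightarrow> 'z) \<Rightarrow> nat \<Rightarrow> 'w" where
  "W S k \<equiv> gd eta G n W1 S k"

definition RS :: "(nat \<Rightarrow> 'z) \<Rightarrow> 'w \<Rightarrow> real" where
  "RS S w = (\<Sum>j<n. f w (S j)) / real n"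

definition gS :: "(nat \<Rightarrow> 'z) \<Rightarrow> 'w \<Rightarrow> 'w" where
  "gS S w = (1 / real n) *\<^sub>R (\<Sum>j<n. G w (S j))"

lemma RS_emp: "emp_risk n f S w = RS S w"
  by (simp add: emp_risk_def RS_def)

lemma RS_nonneg: "0 \<le> RS S w"
  unfolding RS_def by (intro divide_nonneg_nonneg sum_nonneg f_nonneg) auto

lemma eta_nn: "t \<le> T \<Longrightarrow> 0 \<le> eta (Suc t)"
  by (rule eta_nonneg) auto

lemma eta_beta: "t \<le> T \<Longrightarrow> beta * eta (Suc t) \<le> 1"
proof -
  assume t: "t \<le> T"
  have "eta (Suc t) \<le> 1 / beta" using eta_le[of "Suc t"] C_le[of "Suc t"] t by force
  then show ?thesis using beta_pos by (simp add: field_simps)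
qed

lemma W_Suc: "W S (Suc k) = W S k - eta (Suc k) *\<^sub>R gS S (W S k)"
  using n_pos by (simp add: gS_def)

lemma taylor_f: "\<bar>f y z - f x z - G x z \<bullet> (y - x)\<bar> \<le> beta / 2 * (norm (y - x))\<^sup>2"
  by (rule taylor_bounds[where F="\<lambda>v. f v z" and g="\<lambda>v. G v z"]) (rule grad, rule smooth)

lemma taylor_f_up: "f y z \<le> f x z + G x z \<bullet> (y - x) + beta / 2 * (norm (y - x))\<^sup>2"
  using abs_le_D1[OF taylor_f[of y z x]] by linarith

lemma gradsq: "(norm (G w z))\<^sup>2 \<le> 2 * beta * f w z"
  by (rule self_bound[where F="\<lambda>v. f v z" and g="\<lambda>v. G v z"]) (rule taylor_f_up, rule f_nonneg, rule beta_pos)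

lemma RS_up: "RS S y \<le> RS S x + gS S x \<bullet> (y - x) + beta / 2 * (norm (y - x))\<^sup>2"
proof -
  have "(\<Sum>j<n. f y (S j)) \<le> (\<Sum>j<n. f x (S j) + G x (S j) \<bullet> (y - x) + beta / 2 * (norm (y - x))\<^sup>2)"
    by (intro sum_mono taylor_f_up)
  also have "\<dots> = (\<Sum>j<n. f x (S j)) + (\<Sum>j<n. G x (S j)) \<bullet> (y - x) + real n * (beta / 2 * (norm (y - x))\<^sup>2)"
    by (simp add: sum.distrib inner_sum_left)
  finally show ?thesis using n_pos
    by (simp add: RS_def gS_def field_simps)
qed

lemma gS_sq: "(norm (gS S w))\<^sup>2 \<le> 2 * beta * RS S w"
  by (rule self_bound[where F="RS S" and g="gS S"]) (rule RS_up, rule RS_nonneg, rule beta_pos)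

lemma descent_step: assumes "k \<le> T" shows "RS S (W S (Suc k)) \<le> RS S (W S k)"
proof -
  let ?e = "eta (Suc k)" and ?g = "gS S (W S k)"
  have "RS S (W S (Suc k)) \<le> RS S (W S k) + ?g \<bullet> (- (?e *\<^sub>R ?g)) + beta / 2 * (norm (- (?e *\<^sub>R ?g)))\<^sup>2"
    using RS_up[of S "W S k - ?e *\<^sub>R ?g" "W S k"] W_Suc[of S k] by (simp del: gd.simps)
  also have "?g \<bullet> (- (?e *\<^sub>R ?g)) = - ?e * (norm ?g)\<^sup>2"
    by (simp add: power2_norm_eq_inner)
  also have "(norm (- (?e *\<^sub>R ?g)))\<^sup>2 = ?e\<^sup>2 * (norm ?g)\<^sup>2"
    by (simp add: power_mult_distrib)
  also have "RS S (W S k) + - ?e * (norm ?g)\<^sup>2 + beta / 2 * (?e\<^sup>2 * (norm ?g)\<^sup>2) = RS S (W S k) - ?e * (norm ?g)\<^sup>2 * (1 - beta * ?e / 2)"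
    by (simp add: algebra_simps power2_eq_square)
  also have "\<dots> \<le> RS S (W S k)"
    using eta_nn[OF assms] eta_beta[OF assms] by (simp add: mult_nonneg_nonneg)
  finally show ?thesis .
qed

lemma descent: "k \<le> Suc T \<Longrightarrow> RS S (W S k) \<le> RS S W1"
proof (induction k)
  case (Suc k)
  then show ?case using descent_step[of k S] by simp
qed simp

end



context gdset begin

definition Kc :: real where "Kc = (\<Sum>t<T. eta (Suc t))"

lemma Kc_nonneg: "0 \<le> Kc"
  unfolding Kc_def by (intro sum_nonneg eta_nn) auto

lemma gS_norm: "k \<le> T \<Longrightarrow> norm (gS S (W S k)) \<le> sqrt (2 * beta * RS S W1)"
proof -
  assume k: "k \<le> T"
  have "norm (gS S (W S k)) = sqrt ((norm (gS S (W S k)))\<^sup>2)" by simp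
  also have "\<dots> \<le> sqrt (2 * beta * RS S W1)"
  proof (rule real_sqrt_le_mono)
    have "2 * beta * RS S (W S k) \<le> 2 * beta * RS S W1"
      using descent[of k S] k beta_pos by (intro mult_left_mono) auto
    then show "(norm (gS S (W S k)))\<^sup>2 \<le> 2 * beta * RS S W1"
      using gS_sq[of S "W S k"] by linarith
  qed
  finally show ?thesis .
qed

lemma dist_W1: "k \<le> T \<Longrightarrow> norm (W S k - W1) \<le> (\<Sum>t<k. eta (Suc t)) * sqrt (2 * beta * RS S W1)"
proof (induction k)
  case (Suc k)
  have "norm (W S (Suc k) - W1) = norm ((W S k - W1) - eta (Suc k) *\<^sub>R gS S (W S k))"
    by (simp only: W_Suc) (simp add: algebra_simps)
  also have "\<dots> \<le> norm (W S k - W1) + eta (Suc k) * norm (gS S (W S k))"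
    using eta_nn[of k] Suc.prems by (auto intro: order.trans[OF norm_triangle_ineq4])
  also have "\<dots> \<le> (\<Sum>t<k. eta (Suc t)) * sqrt (2 * beta * RS S W1) + eta (Suc k) * sqrt (2 * beta * RS S W1)"
    using Suc eta_nn[of k] gS_norm[of k S] by (intro add_mono mult_left_mono) auto
  finally show ?case by (simp add: algebra_simps)
qed simp

lemma dist_W1_sq: "k \<le> T \<Longrightarrow> (norm (W S k - W1))\<^sup>2 \<le> Kc\<^sup>2 * (2 * beta * RS S W1)"
proof -
  assume k: "k \<le> T"
  have s: "(\<Sum>t<k. eta (Suc t)) \<le> Kc"
    unfolding Kc_def using k by (intro sum_mono2) (auto intro: eta_nn)
  have "norm (W S k - W1) \<le> Kc * sqrt (2 * beta * RS S W1)"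
    using RS_nonneg[of S W1] beta_pos
    by (intro order.trans[OF dist_W1[OF k, of S] mult_right_mono[OF s]]) auto
  then have "(norm (W S k - W1))\<^sup>2 \<le> (Kc * sqrt (2 * beta * RS S W1))\<^sup>2"
    by (intro power_mono) auto
  also have "\<dots> = Kc\<^sup>2 * (2 * beta * RS S W1)"
    using beta_pos RS_nonneg[of S W1] by (simp add: power_mult_distrib)
  finally show ?thesis .
qed

lemma dominate: "f w z \<le> 2 * f W1 z + beta * (norm (w - W1))\<^sup>2"
proof -
  let ?g = "norm (G W1 z)" and ?d = "norm (w - W1)"
  have "f w z \<le> f W1 z + G W1 z \<bullet> (w - W1) + beta / 2 * ?d\<^sup>2" by (rule taylor_f_up)
  also have "G W1 z \<bullet> (w - W1) \<le> ?g * ?d" by (rule Cauchy_Schwarz_ineq2[THEN abs_le_D1])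
  also have "?g * ?d \<le> ?g\<^sup>2 / (2 * beta) + beta / 2 * ?d\<^sup>2"
  proof -
    have "0 \<le> (?g - beta * ?d)\<^sup>2" by simp
    then have "2 * beta * (?g * ?d) \<le> ?g\<^sup>2 + beta\<^sup>2 * ?d\<^sup>2"
      by (simp add: power2_diff power_mult_distrib algebra_simps)
    then show ?thesis using beta_pos by (simp add: field_simps power2_eq_square)
  qed
  also have "?g\<^sup>2 / (2 * beta) \<le> f W1 z"
    using gradsq[of W1 z] beta_pos by (simp add: field_simps)
  finally show ?thesis by simp
qed

lemma dominate_W: "k \<le> T \<Longrightarrow> f (W S k) z \<le> 2 * f W1 z + 2 * beta\<^sup>2 * Kc\<^sup>2 * RS S W1"
proof -
  assume k: "k \<le> T"
  have "f (W S k) z \<le> 2 * f W1 z + beta * (norm (W S k - W1))\<^sup>2" by (rule dominate)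
  also have "\<dots> \<le> 2 * f W1 z + beta * (Kc\<^sup>2 * (2 * beta * RS S W1))"
    using dist_W1_sq[OF k] beta_pos by (intro add_left_mono mult_left_mono) auto
  finally show ?thesis by (simp add: power2_eq_square algebra_simps)
qed

definition cw :: "nat \<Rightarrow> nat \<Rightarrow> real" where
  "cw k t = eta (Suc t) * (\<Prod>s\<in>{Suc t..<k}. 1 + beta * eta (Suc s))"

lemma cw_Suc: "t < k \<Longrightarrow> cw (Suc k) t = cw k t * (1 + beta * eta (Suc k))"
  unfolding cw_def by (simp add: prod.atLeastLessThan_Suc)

lemma cw_same: "cw (Suc k) k = eta (Suc k)"
  unfolding cw_def by simp

lemma cw_nonneg: "k \<le> Suc T \<Longrightarrow> t < k \<Longrightarrow> 0 \<le> cw k t"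
  unfolding cw_def using beta_pos
  by (intro mult_nonneg_nonneg prod_nonneg eta_nn) (auto intro!: add_nonneg_nonneg mult_nonneg_nonneg eta_nn)

lemma cw_telescope: "k \<le> Suc T \<Longrightarrow> beta * (\<Sum>t<k. cw k t) = (\<Prod>s<k. 1 + beta * eta (Suc s)) - 1"
proof (induction k)
  case (Suc k)
  have "(\<Sum>t<k. cw (Suc k) t) = (\<Sum>t<k. cw k t * (1 + beta * eta (Suc k)))"
    by (rule sum.cong) (auto simp: cw_Suc)
  then have "(\<Sum>t<Suc k. cw (Suc k) t) = (\<Sum>t<k. cw k t) * (1 + beta * eta (Suc k)) + eta (Suc k)"
    by (simp add: cw_same sum_distrib_right)
  then have "beta * (\<Sum>t<Suc k. cw (Suc k) t) = (beta * (\<Sum>t<k. cw k t)) * (1 + beta * eta (Suc k)) + beta * eta (Suc k)"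
    by (simp add: algebra_simps)
  also have "beta * (\<Sum>t<k. cw k t) = (\<Prod>s<k. 1 + beta * eta (Suc s)) - 1"
    using Suc by simp
  also have "((\<Prod>s<k. 1 + beta * eta (Suc s)) - 1) * (1 + beta * eta (Suc k)) + beta * eta (Suc k)
     = (\<Prod>s<k. 1 + beta * eta (Suc s)) * (1 + beta * eta (Suc k)) - 1"
    by (simp add: algebra_simps)
  also have "\<dots> = (\<Prod>s<Suc k. 1 + beta * eta (Suc s)) - 1"
    by simp
  finally show ?case .
qed simp

lemma stab_step:
  assumes i: "i < n" and S': "\<And>j. j < n \<Longrightarrow> j \<noteq> i \<Longrightarrow> S' j = S j" and k: "k \<le> T"
  shows "norm (W S' (Suc k) - W S (Suc k)) \<le> (1 + beta * eta (Suc k)) * norm (W S' k - W S k)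
     + eta (Suc k) / real n * (norm (G (W S k) (S i)) + norm (G (W S' k) (S' i)))"
proof -
  let ?d = "norm (W S' k - W S k)" and ?e = "eta (Suc k)"
  let ?a = "norm (G (W S k) (S i)) + norm (G (W S' k) (S' i))"
  have each: "norm (G (W S' k) (S' j) - G (W S k) (S j)) \<le> beta * ?d + (if j = i then ?a else 0)" if "j < n" for j
  proof (cases "j = i")
    case True
    have "norm (G (W S' k) (S' i) - G (W S k) (S i)) \<le> norm (G (W S' k) (S' i)) + norm (G (W S k) (S i))"
      by (rule norm_triangle_ineq4)
    then have "norm (G (W S' k) (S' j) - G (W S k) (S j)) \<le> ?a"
      using True by simp
    then show ?thesis using True beta_pos by (simp add: add_increasing)
  next
    case False
    then show ?thesis using S'[OF that False] smooth by simp
  qed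
  have "norm (\<Sum>j<n. G (W S' k) (S' j) - G (W S k) (S j)) \<le> (\<Sum>j<n. beta * ?d + (if j = i then ?a else 0))"
    by (rule order.trans[OF norm_sum sum_mono]) (use each in auto)
  also have "\<dots> = real n * beta * ?d + ?a"
    using i by (simp add: sum.distrib)
  finally have sn: "norm ((\<Sum>j<n. G (W S' k) (S' j)) - (\<Sum>j<n. G (W S k) (S j))) \<le> real n * beta * ?d + ?a"
    by (simp add: sum_subtractf)
  let ?X = "(\<Sum>j<n. G (W S' k) (S' j)) - (\<Sum>j<n. G (W S k) (S j))"
  have eq: "W S' (Suc k) - W S (Suc k) = (W S' k - W S k) - (?e / real n) *\<^sub>R ?X"
    by (simp add: scaleR_diff_right)
  have "norm (W S' (Suc k) - W S (Suc k)) \<le> ?d + norm ((?e / real n) *\<^sub>R ?X)"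
    unfolding eq by (rule norm_triangle_ineq4)
  also have "norm ((?e / real n) *\<^sub>R ?X) = (?e / real n) * norm ?X"
    using eta_nn[OF k] by simp
  finally have "norm (W S' (Suc k) - W S (Suc k)) \<le> ?d + (?e / real n) * norm ?X" .
  also have "\<dots> \<le> ?d + (?e / real n) * (real n * beta * ?d + ?a)"
    using eta_nn[OF k] sn by (intro add_left_mono mult_left_mono) auto
  also have "\<dots> = (1 + beta * ?e) * ?d + ?e / real n * ?a"
    using n_pos by (simp add: field_simps)
  finally show ?thesis .
qed

lemma stab:
  assumes i: "i < n" and S': "\<And>j. j < n \<Longrightarrow> j \<noteq> i \<Longrightarrow> S' j = S j"
  shows "k \<le> Suc T \<Longrightarrow> norm (W S' k - W S k) \<le> (1 / real n) *
     (\<Sum>t<k. cw k t * (norm (G (W S t) (S i)) + norm (G (W S' t) (S' i))))"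
proof (induction k)
  case (Suc k)
  let ?v = "\<lambda>t. norm (G (W S t) (S i)) + norm (G (W S' t) (S' i))"
  have k: "k \<le> T" using Suc.prems by simp
  have "norm (W S' (Suc k) - W S (Suc k)) \<le> (1 + beta * eta (Suc k)) * norm (W S' k - W S k) + eta (Suc k) / real n * ?v k"
    by (rule stab_step[OF i S' k])
  also have "\<dots> \<le> (1 + beta * eta (Suc k)) * ((1 / real n) * (\<Sum>t<k. cw k t * ?v t)) + eta (Suc k) / real n * ?v k"
    using Suc k eta_nn[OF k] beta_pos by (intro add_right_mono mult_left_mono) auto
  also have "\<dots> = (1 / real n) * (\<Sum>t<Suc k. cw (Suc k) t * ?v t)"
  proof -
    have "(\<Sum>t<k. cw (Suc k) t * ?v t) = (1 + beta * eta (Suc k)) * (\<Sum>t<k. cw k t * ?v t)"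
      by (simp add: sum_distrib_left, rule sum.cong) (auto simp: cw_Suc)
    then have "(\<Sum>t<Suc k. cw (Suc k) t * ?v t) = (1 + beta * eta (Suc k)) * (\<Sum>t<k. cw k t * ?v t) + eta (Suc k) * ?v k"
      by (simp add: cw_same)
    then show ?thesis using n_pos by (simp add: field_simps)
  qed
  finally show ?case .
qed simp

lemma C_nonneg: "0 \<le> C"
  using eta_nonneg[of 1] eta_le[of 1] T_pos by force

lemma harm_le_ln: "1 \<le> m \<Longrightarrow> harm m \<le> 1 + ln (real m)"
proof (induction m rule: dec_induct)
  case base then show ?case by (simp add: harm_def)
next
  case (step m)
  have "inverse (real (Suc m)) \<le> ln (real (Suc m)) - ln (real m)"
  proof -
    have "ln (real m / real (Suc m)) \<le> real m / real (Suc m) - 1"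
      using step by (intro ln_le_minus_one) auto
    also have "\<dots> = - inverse (real (Suc m))" by (simp add: field_simps)
    finally show ?thesis using step by (simp add: ln_div)
  qed
  then show ?case using step by (simp add: harm_Suc)
qed

lemma prod_bound: "(\<Prod>s<T. 1 + beta * eta (Suc s)) \<le> (exp 1 * real T) powr (beta * C)"
proof -
  have "(\<Prod>s<T. 1 + beta * eta (Suc s)) \<le> (\<Prod>s<T. exp (beta * eta (Suc s)))"
    using beta_pos by (intro prod_mono) (auto intro!: add_nonneg_nonneg mult_nonneg_nonneg eta_nn exp_ge_add_one_self)
  also have "\<dots> = exp (\<Sum>s<T. beta * eta (Suc s))" by (simp add: exp_sum)
  also have "(\<Sum>s<T. beta * eta (Suc s)) \<le> (\<Sum>s<T. beta * C * inverse (real (Suc s)))"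
  proof (rule sum_mono)
    fix s assume "s \<in> {..<T}"
    then have "eta (Suc s) \<le> C / real (Suc s)" using eta_le[of "Suc s"] by simp
    then have "beta * eta (Suc s) \<le> beta * (C / real (Suc s))" using beta_pos by (intro mult_left_mono) auto
    then show "beta * eta (Suc s) \<le> beta * C * inverse (real (Suc s))" by (simp add: divide_inverse)
  qed
  also have "\<dots> = beta * C * harm T" by (simp add: harm_altdef sum_distrib_left)
  also have "\<dots> \<le> beta * C * (1 + ln (real T))"
    using beta_pos C_nonneg harm_le_ln[OF T_pos] by (intro mult_left_mono) auto
  also have "exp (beta * C * (1 + ln (real T))) = (exp 1 * real T) powr (beta * C)"
    using T_pos by (simp add: powr_def ln_mult mult.commute)
  finally show ?thesis by simp
qed

end



lemma rounding_tendsto: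
  fixes a :: real
  shows "(\<lambda>m. real_of_int \<lfloor>real (Suc m) * a\<rfloor> / real (Suc m)) \<longlonglongrightarrow> a"
proof (rule real_tendsto_sandwich)
  show "\<forall>\<^sub>F m in sequentially. a - inverse (real (Suc m)) \<le> real_of_int \<lfloor>real (Suc m) * a\<rfloor> / real (Suc m)"
  proof (intro always_eventually allI)
    fix m
    have "real (Suc m) * a - 1 \<le> real_of_int \<lfloor>real (Suc m) * a\<rfloor>" by linarith
    then have "(real (Suc m) * a - 1) / real (Suc m) \<le> real_of_int \<lfloor>real (Suc m) * a\<rfloor> / real (Suc m)"
      by (rule divide_right_mono) auto
    moreover have "a - inverse (real (Suc m)) = (real (Suc m) * a - 1) / real (Suc m)"
      by (simp add: field_simps)
    ultimately show "a - inverse (real (Suc m)) \<le> real_of_int \<lfloor>real (Suc m) * a\<rfloor> / real (Suc m)"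
      by simp
  qed
  show "\<forall>\<^sub>F m in sequentially. real_of_int \<lfloor>real (Suc m) * a\<rfloor> / real (Suc m) \<le> a"
  proof (intro always_eventually allI)
    fix m
    have "real_of_int \<lfloor>real (Suc m) * a\<rfloor> \<le> real (Suc m) * a" by linarith
    then show "real_of_int \<lfloor>real (Suc m) * a\<rfloor> / real (Suc m) \<le> a"
      by (simp add: field_simps)
  qed
  show "(\<lambda>m. a - inverse (real (Suc m))) \<longlonglongrightarrow> a"
    using tendsto_diff[OF tendsto_const LIMSEQ_inverse_real_of_nat, of a] by simp
qed simp

definition qround :: "nat \<Rightarrow> 'w::euclidean_space \<Rightarrow> 'w" where
  "qround m w = (\<Sum>b\<in>Basis. (real_of_int \<lfloor>real (Suc m) * (w \<bullet> b)\<rfloor> / real (Suc m)) *\<^sub>R b)"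

lemma qround_tendsto: "(\<lambda>m. qround m w) \<longlonglongrightarrow> w"
proof -
  have "(\<lambda>m. qround m w) \<longlonglongrightarrow> (\<Sum>b\<in>Basis. (w \<bullet> b) *\<^sub>R b)"
    unfolding qround_def by (intro tendsto_intros rounding_tendsto)
  then show ?thesis by (simp add: euclidean_representation)
qed

lemma qround_meas[measurable]: "qround m \<in> borel_measurable borel"
  unfolding qround_def by measurable

lemma qround_countable: "countable (range (qround m :: 'w::euclidean_space \<Rightarrow> 'w))"
proof -
  let ?F = "\<lambda>k. (\<Sum>b\<in>(Basis::'w set). (real_of_int (k b) / real (Suc m)) *\<^sub>R b)"
  have "range (qround m :: 'w \<Rightarrow> 'w) \<subseteq> ?F ` (Basis \<rightarrow>\<^sub>E (UNIV :: int set))"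
  proof
    fix x assume "x \<in> range (qround m :: 'w \<Rightarrow> 'w)"
    then obtain w where x: "x = qround m w" by auto
    show "x \<in> ?F ` (Basis \<rightarrow>\<^sub>E (UNIV :: int set))"
      unfolding x qround_def
      by (rule image_eqI[where x="restrict (\<lambda>b. \<lfloor>real (Suc m) * (w \<bullet> b)\<rfloor>) Basis"])
         (auto intro!: sum.cong)
  qed
  moreover have "countable (?F ` (Basis \<rightarrow>\<^sub>E (UNIV :: int set)))"
    by (intro countable_image countable_PiE) auto
  ultimately show ?thesis by (rule countable_subset)
qed

lemma caratheodory_meas:
  fixes h :: "'w::euclidean_space \<Rightarrow> 'z \<Rightarrow> 'b::metric_space"
  assumes cont: "\<And>z. continuous_on UNIV (\<lambda>w. h w z)"
    and meas: "\<And>w. (\<lambda>z. h w z) \<in> borel_measurable M"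
  shows "(\<lambda>x. h (fst x) (snd x)) \<in> borel_measurable (borel \<Otimes>\<^sub>M M)"
proof (rule borel_measurable_LIMSEQ_metric)
  fix m
  show "(\<lambda>x. h (qround m (fst x)) (snd x)) \<in> borel_measurable (borel \<Otimes>\<^sub>M M)"
  proof (rule measurable_compose_countable'[where I="range (qround m)"])
    fix c
    show "(\<lambda>x. h c (snd x)) \<in> borel_measurable (borel \<Otimes>\<^sub>M M)"
      using meas[of c] by measurable
  next
    show "(\<lambda>x. qround m (fst x)) \<in> measurable (borel \<Otimes>\<^sub>M M) (count_space (range (qround m)))"
    proof -
      have pre: "(\<lambda>x. qround m (fst x)) -` {a} \<inter> space (borel \<Otimes>\<^sub>M M) \<in> sets (borel \<Otimes>\<^sub>M M)" for a :: 'w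
      proof -
        have "{x \<in> space (borel \<Otimes>\<^sub>M M). qround m (fst x) = a} \<in> sets (borel \<Otimes>\<^sub>M M)"
          by measurable
        moreover have "{x \<in> space (borel \<Otimes>\<^sub>M M). qround m (fst x) = a} = (\<lambda>x. qround m (fst x)) -` {a} \<inter> space (borel \<Otimes>\<^sub>M M)"
          by auto
        ultimately show ?thesis by simp
      qed
      show ?thesis
        unfolding measurable_count_space_eq_countable[OF qround_countable]
        using pre by auto
    qed
  next
    show "countable (range (qround m :: 'w \<Rightarrow> 'w))" by (rule qround_countable)
  qed
next
  fix x :: "'w \<times> 'z"
  have "isCont (\<lambda>w. h w (snd x)) (fst x)"
    using cont[of "snd x"] by (simp add: continuous_on_eq_continuous_at)
  then show "(\<lambda>m. h (qround m (fst x)) (snd x)) \<longlonglongrightarrow> h (fst x) (snd x)"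
    by (rule isCont_tendsto_compose) (rule qround_tendsto)
qed



context gdset begin

lemma G_cont: "continuous_on UNIV (\<lambda>w. G w z)"
  by (rule lipschitz_on_continuous_on[where L=beta], rule lipschitz_onI)
     (use smooth beta_pos in \<open>auto simp: dist_norm\<close>)

lemma f_cont: "continuous_on UNIV (\<lambda>w. f w z)"
  by (intro continuous_at_imp_continuous_on ballI has_derivative_continuous[OF grad])

lemma dir_deriv: "((\<lambda>t. f (w + t *\<^sub>R b) z) has_real_derivative (G w z \<bullet> b)) (at 0)"
proof -
  have "((\<lambda>t. f (w + t *\<^sub>R b) z) has_derivative (\<lambda>s. G (w + 0 *\<^sub>R b) z \<bullet> (s *\<^sub>R b))) (at 0)"
    by (rule has_derivative_compose[OF _ grad]) (auto intro!: derivative_eq_intros)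
  moreover have "(\<lambda>s. G (w + 0 *\<^sub>R b) z \<bullet> (s *\<^sub>R b)) = (*) (G w z \<bullet> b)"
    by (auto simp: inner_scaleR_right mult.commute)
  ultimately show ?thesis by (simp add: has_field_derivative_def)
qed

lemma G_inner_meas: "(\<lambda>z. G w z \<bullet> b) \<in> borel_measurable D"
proof (rule borel_measurable_LIMSEQ_real)
  fix z
  have "(\<lambda>h. (f (w + (0 + h) *\<^sub>R b) z - f (w + 0 *\<^sub>R b) z) / h) \<midarrow>0\<rightarrow> G w z \<bullet> b"
    using dir_deriv[of w b z] unfolding DERIV_def by simp
  then have "(\<lambda>m. (\<lambda>h. (f (w + (0 + h) *\<^sub>R b) z - f (w + 0 *\<^sub>R b) z) / h) (inverse (real (Suc m)))) \<longlonglongrightarrow> G w z \<bullet> b"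
    using LIMSEQ_inverse_real_of_nat by (subst (asm) LIMSEQ_SEQ_conv[symmetric]) auto
  then show "(\<lambda>m. (f (w + inverse (real (Suc m)) *\<^sub>R b) z - f w z) / inverse (real (Suc m))) \<longlonglongrightarrow> G w z \<bullet> b"
    by simp
next
  fix m
  show "(\<lambda>z. (f (w + inverse (real (Suc m)) *\<^sub>R b) z - f w z) / inverse (real (Suc m))) \<in> borel_measurable D"
    using f_meas by measurable
qed

lemma G_meas: "(\<lambda>z. G w z) \<in> borel_measurable D"
proof -
  have [measurable]: "\<And>b. (\<lambda>z. G w z \<bullet> b) \<in> borel_measurable D" by (rule G_inner_meas)
  have "(\<lambda>z. \<Sum>b\<in>Basis. (G w z \<bullet> b) *\<^sub>R b) \<in> borel_measurable D" by measurable
  then show ?thesis by (simp add: euclidean_representation)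
qed

lemma G_joint[measurable]: "(\<lambda>x. G (fst x) (snd x)) \<in> borel_measurable (borel \<Otimes>\<^sub>M D)"
  by (rule caratheodory_meas[OF G_cont G_meas])

lemma f_joint[measurable]: "(\<lambda>x. f (fst x) (snd x)) \<in> borel_measurable (borel \<Otimes>\<^sub>M D)"
  by (rule caratheodory_meas[OF f_cont f_meas])

lemma G_comp_meas:
  assumes "a \<in> borel_measurable M" "b \<in> measurable M D"
  shows "(\<lambda>x. G (a x) (b x)) \<in> borel_measurable M"
  using measurable_compose[OF measurable_Pair[OF assms] G_joint] by simp

lemma f_comp_meas:
  assumes "a \<in> borel_measurable M" "b \<in> measurable M D"
  shows "(\<lambda>x. f (a x) (b x)) \<in> borel_measurable M"
  using measurable_compose[OF measurable_Pair[OF assms] f_joint] by simp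

lemma W_meas:
  assumes I: "{..<n} \<subseteq> I"
  shows "(\<lambda>S. W S k) \<in> borel_measurable (PiM I (\<lambda>_. D))"
proof (induction k)
  case 0 then show ?case by simp
next
  case (Suc k)
  have [measurable]: "(\<lambda>S. G (W S k) (S j)) \<in> borel_measurable (PiM I (\<lambda>_. D))" if "j < n" for j
    using that I by (intro G_comp_meas Suc measurable_component_singleton) auto
  note Suc[measurable]
  show ?case by simp measurable
qed

lemma fW_meas:
  assumes I: "{..<n} \<subseteq> I" and j: "j \<in> I"
  shows "(\<lambda>S. f (W S k) (S j)) \<in> borel_measurable (PiM I (\<lambda>_. D))"
  using I j by (intro f_comp_meas W_meas measurable_component_singleton) auto

lemma pop_meas:
  "(\<lambda>S. pop_risk D f (W S k)) \<in> borel_measurable (PiM {..<n} (\<lambda>_. D))"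
proof -
  interpret D: prob_space D by (rule D)
  have "(\<lambda>x. f (W (fst x) k) (snd x)) \<in> borel_measurable (PiM {..<n} (\<lambda>_. D) \<Otimes>\<^sub>M D)"
    by (intro f_comp_meas measurable_compose[OF measurable_fst W_meas] measurable_snd) auto
  then have "case_prod (\<lambda>S z. f (W S k) z) \<in> borel_measurable (PiM {..<n} (\<lambda>_. D) \<Otimes>\<^sub>M D)"
    by (simp add: case_prod_beta')
  then show ?thesis
    unfolding pop_risk_def by (rule D.borel_measurable_lebesgue_integral)
qed

end



context gdset begin

abbreviation PP :: "(nat \<Rightarrow> 'z) measure" where "PP \<equiv> PiM {..<n} (\<lambda>_. D)"
abbreviation PQ :: "(nat \<Rightarrow> 'z) measure" where "PQ \<equiv> PiM (insert n {..<n}) (\<lambda>_. D)"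

definition tau :: "nat \<Rightarrow> nat \<Rightarrow> nat" where
  "tau i j = (if j = i then n else if j = n then i else j)"

definition sw :: "nat \<Rightarrow> (nat \<Rightarrow> 'z) \<Rightarrow> (nat \<Rightarrow> 'z)" where
  "sw i S = (\<lambda>j\<in>insert n {..<n}. S (tau i j))"

lemma PP_prob: "prob_space PP"
  by (intro prob_space_PiM D)

lemma PQ_prob: "prob_space PQ"
  by (intro prob_space_PiM D)

lemma tau_in: "i < n \<Longrightarrow> j \<in> insert n {..<n} \<Longrightarrow> tau i j \<in> insert n {..<n}"
  by (auto simp: tau_def)

lemma sw_meas: "i < n \<Longrightarrow> sw i \<in> measurable PQ PQ"
  unfolding sw_def
  by (intro measurable_restrict measurable_component_singleton tau_in) auto

lemma sw_distr: "i < n \<Longrightarrow> distr PQ PQ (sw i) = PQ"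
proof -
  assume i: "i < n"
  have "inj_on (tau i) (insert n {..<n})"
    using i by (auto simp: inj_on_def tau_def split: if_splits)
  moreover have "tau i \<in> insert n {..<n} \<rightarrow> insert n {..<n}" using tau_in[OF i] by auto
  ultimately show ?thesis
    using distr_PiM_reindex[where M="\<lambda>_. D" and K="insert n {..<n}" and I="insert n {..<n}" and f="tau i"] D
    unfolding sw_def by simp
qed

lemma integral_sw:
  fixes h :: "(nat \<Rightarrow> 'z) \<Rightarrow> real"
  assumes i: "i < n" and h: "h \<in> borel_measurable PQ"
  shows "(\<integral>S. h (sw i S) \<partial>PQ) = (\<integral>S. h S \<partial>PQ)"
  using integral_distr[OF sw_meas[OF i] h] sw_distr[OF i] by simp

lemma integrable_sw:
  fixes h :: "(nat \<Rightarrow> 'z) \<Rightarrow> real"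
  assumes i: "i < n" and h: "integrable PQ h"
  shows "integrable PQ (\<lambda>S. h (sw i S))"
  using integrable_distr_eq[OF sw_meas[OF i] borel_measurable_integrable[OF h]] sw_distr[OF i] h by simp

lemma sw_n: "i < n \<Longrightarrow> sw i S n = S i"
  by (simp add: sw_def tau_def)

lemma sw_i: "i < n \<Longrightarrow> sw i S i = S n"
  by (simp add: sw_def tau_def)

lemma sw_j: "i < n \<Longrightarrow> j < n \<Longrightarrow> j \<noteq> i \<Longrightarrow> sw i S j = S j"
  by (simp add: sw_def tau_def)

lemma sw_sw: "i < n \<Longrightarrow> j < n \<Longrightarrow> sw i (sw i S) j = S j"
  by (auto simp: sw_def tau_def)

lemma W_local: "(\<And>j. j < n \<Longrightarrow> S j = S' j) \<Longrightarrow> W S k = W S' k"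
  by (induction k) auto

lemma RS_local: "(\<And>j. j < n \<Longrightarrow> S j = S' j) \<Longrightarrow> RS S w = RS S' w"
  unfolding RS_def by (auto intro!: sum.cong)

lemma comp_integrable:
  assumes j: "j \<in> insert n {..<n}"
  shows "integrable PQ (\<lambda>S. f W1 (S j))"
proof -
  have "distr PQ D (\<lambda>\<omega>. \<omega> j) = D"
    using j D by (intro distr_PiM_component) auto
  then show ?thesis
    using integrable_distr_eq[of "\<lambda>\<omega>. \<omega> j" PQ D "f W1"] integrable_init f_meas j
    by (simp add: measurable_component_singleton)
qed

lemma RS1_integrable: "integrable PQ (\<lambda>S. RS S W1)"
  unfolding RS_def by (rule Bochner_Integration.integrable_divide_zero, rule Bochner_Integration.integrable_sum, rule comp_integrable) auto

lemma fW_integrable: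
  assumes j: "j \<in> insert n {..<n}" and t: "t \<le> T"
  shows "integrable PQ (\<lambda>S. f (W S t) (S j))"
proof -
  have bi: "integrable PQ (\<lambda>S. 2 * f W1 (S j) + 2 * beta\<^sup>2 * Kc\<^sup>2 * RS S W1)"
    by (intro Bochner_Integration.integrable_add Bochner_Integration.integrable_mult_right comp_integrable[OF j] RS1_integrable)
  show ?thesis
  proof (rule Bochner_Integration.integrable_bound[OF bi])
  show "(\<lambda>S. f (W S t) (S j)) \<in> borel_measurable PQ"
    using j by (intro fW_meas) auto
  show "AE S in PQ. norm (f (W S t) (S j)) \<le> norm (2 * f W1 (S j) + 2 * beta\<^sup>2 * Kc\<^sup>2 * RS S W1)"
  proof (intro AE_I2)
    fix S
    have "0 \<le> 2 * f W1 (S j) + 2 * beta\<^sup>2 * Kc\<^sup>2 * RS S W1"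
      using f_nonneg RS_nonneg by (intro add_nonneg_nonneg mult_nonneg_nonneg) auto
    then show "norm (f (W S t) (S j)) \<le> norm (2 * f W1 (S j) + 2 * beta\<^sup>2 * Kc\<^sup>2 * RS S W1)"
      using dominate_W[OF t, of S "S j"] f_nonneg by simp
  qed
  qed
qed

lemma RSW_integrable: "t \<le> T \<Longrightarrow> integrable PQ (\<lambda>S. RS S (W S t))"
  unfolding RS_def by (rule Bochner_Integration.integrable_divide_zero, rule Bochner_Integration.integrable_sum, rule fW_integrable) auto

lemma RS_meas: "{..<n} \<subseteq> I \<Longrightarrow> (\<lambda>S. RS S (W S t)) \<in> borel_measurable (PiM I (\<lambda>_. D))"
  unfolding RS_def by (intro borel_measurable_divide borel_measurable_sum fW_meas) auto

lemma RS1_meas: "{..<n} \<subseteq> I \<Longrightarrow> (\<lambda>S. RS S W1) \<in> borel_measurable (PiM I (\<lambda>_. D))"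
  using RS_meas[of I 0] by simp

lemma transfer_restrict:
  fixes g :: "(nat \<Rightarrow> 'z) \<Rightarrow> real"
  assumes g: "g \<in> borel_measurable PP" and loc: "\<And>S S'. (\<And>j. j < n \<Longrightarrow> S j = S' j) \<Longrightarrow> g S = g S'"
  shows "(\<integral>S. g S \<partial>PP) = (\<integral>S. g S \<partial>PQ)" and "integrable PP g \<longleftrightarrow> integrable PQ g"
proof -
  interpret Pr: product_prob_space "\<lambda>_. D" UNIV
    by (simp add: product_prob_space_def product_prob_space_axioms_def product_sigma_finite_def D prob_space_imp_sigma_finite)
  have eq: "PP = distr PQ PP (\<lambda>S. restrict S {..<n})"
    by (rule Pr.distr_restrict) auto
  have m: "(\<lambda>S. restrict S {..<n}) \<in> measurable PQ PP"
    by (rule measurable_restrict_subset) auto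
  have gg: "g (restrict S {..<n}) = g S" for S
    by (rule loc) auto
  have "(\<integral>S. g S \<partial>PP) = (\<integral>S. g (restrict S {..<n}) \<partial>PQ)"
    by (subst eq) (rule integral_distr[OF m g])
  then show "(\<integral>S. g S \<partial>PP) = (\<integral>S. g S \<partial>PQ)" by (simp add: gg)
  have "integrable PP g \<longleftrightarrow> integrable PQ (\<lambda>S. g (restrict S {..<n}))"
    by (subst eq) (rule integrable_distr_eq[OF m g])
  then show "integrable PP g \<longleftrightarrow> integrable PQ g" by (simp add: gg)
qed

end



context gdset begin

lemma weighted_CS:
  fixes c v :: "nat \<Rightarrow> real"
  assumes "\<And>t. t \<in> A \<Longrightarrow> 0 \<le> c t"
  shows "(\<Sum>t\<in>A. c t * v t)\<^sup>2 \<le> (\<Sum>t\<in>A. c t) * (\<Sum>t\<in>A. c t * (v t)\<^sup>2)"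
proof -
  have "(\<Sum>t\<in>A. sqrt (c t) * (sqrt (c t) * v t))\<^sup>2 \<le> (\<Sum>t\<in>A. (sqrt (c t))\<^sup>2) * (\<Sum>t\<in>A. (sqrt (c t) * v t)\<^sup>2)"
    by (rule Cauchy_Schwarz_ineq_sum)
  moreover have "(\<Sum>t\<in>A. sqrt (c t) * (sqrt (c t) * v t)) = (\<Sum>t\<in>A. c t * v t)"
    using assms by (intro sum.cong) (auto simp: mult.assoc[symmetric])
  moreover have "(\<Sum>t\<in>A. (sqrt (c t))\<^sup>2) = (\<Sum>t\<in>A. c t)"
    using assms by (intro sum.cong) auto
  moreover have "(\<Sum>t\<in>A. (sqrt (c t) * v t)\<^sup>2) = (\<Sum>t\<in>A. c t * (v t)\<^sup>2)"
    using assms by (intro sum.cong) (auto simp: power_mult_distrib)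
  ultimately show ?thesis by simp
qed

lemma delta_sq:
  assumes i: "i < n" and S': "\<And>j. j < n \<Longrightarrow> j \<noteq> i \<Longrightarrow> S' j = S j"
  shows "(norm (W S' T - W S T))\<^sup>2 \<le> 4 * beta / (real n)\<^sup>2 * (\<Sum>t<T. cw T t) *
           (\<Sum>t<T. cw T t * (f (W S t) (S i) + f (W S' t) (S' i)))"
proof -
  let ?v = "\<lambda>t. norm (G (W S t) (S i)) + norm (G (W S' t) (S' i))"
  have c0: "\<And>t. t \<in> {..<T} \<Longrightarrow> 0 \<le> cw T t" by (intro cw_nonneg) auto
  have "norm (W S' T - W S T) \<le> (1 / real n) * (\<Sum>t<T. cw T t * ?v t)"
    by (rule stab[OF i S']) auto
  then have A: "(norm (W S' T - W S T))\<^sup>2 \<le> ((1 / real n) * (\<Sum>t<T. cw T t * ?v t))\<^sup>2"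
    by (intro power_mono) auto
  have B1: "(\<Sum>t<T. cw T t * ?v t)\<^sup>2 \<le> (\<Sum>t<T. cw T t) * (\<Sum>t<T. cw T t * (?v t)\<^sup>2)"
    by (rule weighted_CS[OF c0])
  have B2: "(\<Sum>t<T. cw T t * (?v t)\<^sup>2) \<le> (\<Sum>t<T. cw T t * (4 * beta * (f (W S t) (S i) + f (W S' t) (S' i))))"
  proof (intro sum_mono mult_left_mono c0)
    fix t
    let ?a = "norm (G (W S t) (S i))" and ?b = "norm (G (W S' t) (S' i))"
    have "(?a + ?b)\<^sup>2 \<le> 2 * ?a\<^sup>2 + 2 * ?b\<^sup>2"
    proof -
      have "0 \<le> (?a - ?b)\<^sup>2" by simp
      then show ?thesis by (simp add: power2_sum power2_diff)
    qed
    also have "\<dots> \<le> 2 * (2 * beta * f (W S t) (S i)) + 2 * (2 * beta * f (W S' t) (S' i))"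
      using gradsq by (intro add_mono mult_left_mono) auto
    finally show "(?a + ?b)\<^sup>2 \<le> 4 * beta * (f (W S t) (S i) + f (W S' t) (S' i))"
      by (simp add: algebra_simps)
  qed
  have B3: "(\<Sum>t<T. cw T t * (4 * beta * (f (W S t) (S i) + f (W S' t) (S' i))))
     = 4 * beta * (\<Sum>t<T. cw T t * (f (W S t) (S i) + f (W S' t) (S' i)))"
    by (simp add: sum_distrib_left algebra_simps)
  let ?X = "\<Sum>t<T. cw T t * (f (W S t) (S i) + f (W S' t) (S' i))"
  have sc: "0 \<le> (\<Sum>t<T. cw T t)" using c0 by (intro sum_nonneg) auto
  have B: "(\<Sum>t<T. cw T t * ?v t)\<^sup>2 \<le> (\<Sum>t<T. cw T t) * (4 * beta * ?X)"
    using B1 mult_left_mono[OF B2 sc] B3 by simp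
  have "((1 / real n) * (\<Sum>t<T. cw T t * ?v t))\<^sup>2 = (1 / real n)\<^sup>2 * (\<Sum>t<T. cw T t * ?v t)\<^sup>2"
    by (simp only: power_mult_distrib)
  also have "\<dots> \<le> (1 / real n)\<^sup>2 * ((\<Sum>t<T. cw T t) * (4 * beta * ?X))"
    using B by (intro mult_left_mono) auto
  also have "\<dots> = 4 * beta / (real n)\<^sup>2 * (\<Sum>t<T. cw T t) * ?X"
    by (simp add: power_divide)
  finally show ?thesis using A by linarith
qed

lemma pointwise:
  assumes i: "i < n" and S': "\<And>j. j < n \<Longrightarrow> j \<noteq> i \<Longrightarrow> S' j = S j" and lam: "lam > 0"
  shows "\<bar>f (W S' T) (S i) - f (W S T) (S i)\<bar> \<le> lam * beta * f (W S T) (S i)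
     + (1 / (2 * lam) + beta / 2) * (4 * beta / (real n)\<^sup>2 * (\<Sum>t<T. cw T t) *
           (\<Sum>t<T. cw T t * (f (W S t) (S i) + f (W S' t) (S' i))))"
proof -
  let ?d = "norm (W S' T - W S T)" and ?g = "norm (G (W S T) (S i))"
  let ?Dt = "4 * beta / (real n)\<^sup>2 * (\<Sum>t<T. cw T t) * (\<Sum>t<T. cw T t * (f (W S t) (S i) + f (W S' t) (S' i)))"
  have t: "\<bar>f (W S' T) (S i) - f (W S T) (S i) - G (W S T) (S i) \<bullet> (W S' T - W S T)\<bar> \<le> beta / 2 * ?d\<^sup>2"
    by (rule taylor_f)
  have cs: "\<bar>G (W S T) (S i) \<bullet> (W S' T - W S T)\<bar> \<le> ?g * ?d" by (rule Cauchy_Schwarz_ineq2)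
  have am: "?g * ?d \<le> lam / 2 * ?g\<^sup>2 + ?d\<^sup>2 / (2 * lam)"
  proof -
    have "0 \<le> (lam * ?g - ?d)\<^sup>2" by simp
    then have "2 * lam * (?g * ?d) \<le> lam\<^sup>2 * ?g\<^sup>2 + ?d\<^sup>2"
      by (simp add: power2_diff power_mult_distrib algebra_simps)
    then show ?thesis using lam by (simp add: field_simps power2_eq_square)
  qed
  have gs: "lam / 2 * ?g\<^sup>2 \<le> lam * beta * f (W S T) (S i)"
    using gradsq[of "W S T" "S i"] lam by (simp add: field_simps)
  have ds: "?d\<^sup>2 \<le> ?Dt" by (rule delta_sq[OF i S'])
  have "\<bar>f (W S' T) (S i) - f (W S T) (S i)\<bar> \<le> ?g * ?d + beta / 2 * ?d\<^sup>2"
    using t cs by linarith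
  also have "\<dots> \<le> lam * beta * f (W S T) (S i) + (1 / (2 * lam) + beta / 2) * ?d\<^sup>2"
    using am gs by (simp add: algebra_simps)
  also have "\<dots> \<le> lam * beta * f (W S T) (S i) + (1 / (2 * lam) + beta / 2) * ?Dt"
    using ds lam beta_pos by (intro add_left_mono mult_left_mono) auto
  finally show ?thesis .
qed

lemma pop_transfer:
  shows "integrable PP (\<lambda>S. pop_risk D f (W S T))"
    and "(\<integral>S. pop_risk D f (W S T) \<partial>PP) = (\<integral>S. f (W S T) (S n) \<partial>PQ)"
proof -
  interpret Dp: prob_space D by (rule D)
  interpret Pp: prob_space PP by (rule PP_prob)
  interpret DP: pair_sigma_finite D PP
    by (simp add: pair_sigma_finite_def Dp.sigma_finite_measure_axioms Pp.sigma_finite_measure_axioms)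
  let ?h = "\<lambda>S. f (W S T) (S n)"
  let ?u = "\<lambda>(x, X). X(n := x)"
  have um: "?u \<in> measurable (D \<Otimes>\<^sub>M PP) PQ"
  proof -
    have "(\<lambda>p. (snd p, fst p)) \<in> measurable (D \<Otimes>\<^sub>M PP) (PP \<Otimes>\<^sub>M D)"
      by (intro measurable_Pair measurable_snd measurable_fst)
    from measurable_compose[OF this measurable_add_dim[of n "{..<n}" "\<lambda>_. D"]]
    show ?thesis by (simp add: case_prod_beta')
  qed
  have dist: "distr (D \<Otimes>\<^sub>M PP) PQ ?u = PQ"
    using distr_pair_PiM_eq_PiM[of "{..<n}" "\<lambda>_. D" n] D by simp
  have hm: "?h \<in> borel_measurable PQ" by (intro fW_meas) auto
  have hi: "integrable PQ ?h" by (intro fW_integrable) auto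
  have hu: "?h (?u p) = (case p of (x, X) \<Rightarrow> f (W X T) x)" for p
  proof (cases p)
    case (Pair x X)
    have "W (X(n := x)) T = W X T" by (rule W_local) auto
    then show ?thesis using Pair by simp
  qed
  have int2: "integrable (D \<Otimes>\<^sub>M PP) (case_prod (\<lambda>x X. f (W X T) x))"
    using integrable_distr_eq[OF um hm] hi dist by (simp add: hu)
  show "integrable PP (\<lambda>S. pop_risk D f (W S T))"
    using DP.integrable_snd[OF int2] by (simp add: pop_risk_def)
  have "(\<integral>S. pop_risk D f (W S T) \<partial>PP) = integral\<^sup>L (D \<Otimes>\<^sub>M PP) (case_prod (\<lambda>x X. f (W X T) x))"
    using DP.integral_snd[OF int2] by (simp add: pop_risk_def)
  also have "\<dots> = (\<integral>p. ?h (?u p) \<partial>(D \<Otimes>\<^sub>M PP))" by (simp add: hu)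
  also have "\<dots> = integral\<^sup>L (distr (D \<Otimes>\<^sub>M PP) PQ ?u) ?h"
    by (rule integral_distr[OF um hm, symmetric])
  also have "\<dots> = (\<integral>S. ?h S \<partial>PQ)" by (simp add: dist)
  finally show "(\<integral>S. pop_risk D f (W S T) \<partial>PP) = (\<integral>S. f (W S T) (S n) \<partial>PQ)" .
qed

end



lemma final_arith:
  fixes n X E L beta rho :: real
  assumes n: "n > 0" and X: "0 \<le> X" "X \<le> E" and E: "1 \<le> E" and L: "1 \<le> L" and b: "beta > 0" and rho: "0 \<le> rho"
  shows "(2 * (2 * sqrt 3 * sqrt L * E) / (beta * n) * beta
          + 2 * ((1 / (2 * (2 * (2 * sqrt 3 * sqrt L * E) / (beta * n))) + beta / 2) * (4 * beta / n\<^sup>2) * (X / beta)) * (X / beta)) * rho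
         \<le> (8 * sqrt 3 / n * sqrt L * E + 48 / n\<^sup>2 * L * E\<^sup>2) * rho"
proof (rule mult_right_mono[OF _ rho])
  define Y where "Y = 2 * sqrt 3 * sqrt L * E"
  have s3: "1 \<le> sqrt 3" by simp
  have sL: "1 \<le> sqrt L" using L by simp
  have k: "1 \<le> sqrt 3 * sqrt L" using mult_mono[OF s3 sL] by simp
  have "E \<le> E * (sqrt 3 * sqrt L)" using mult_left_mono[OF k, of E] E by simp
  moreover have "Y = 2 * (E * (sqrt 3 * sqrt L))" unfolding Y_def by (simp add: algebra_simps)
  ultimately have YE: "E \<le> Y" using E by linarith
  have Ypos: "0 < Y" using YE E by linarith
  have XY: "X \<le> Y" using X YE by linarith
  have X2: "X\<^sup>2 \<le> Y\<^sup>2" using X XY by (intro power_mono) auto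
  have eq: "2 * Y / (beta * n) * beta + 2 * ((1 / (2 * (2 * Y / (beta * n))) + beta / 2) * (4 * beta / n\<^sup>2) * (X / beta)) * (X / beta)
      = 2 * Y / n + 2 * (X\<^sup>2 / Y) / n + 4 * X\<^sup>2 / n\<^sup>2"
    using n b Ypos by (simp add: field_simps power2_eq_square)
  have "X\<^sup>2 / Y \<le> Y\<^sup>2 / Y" using X2 Ypos by (intro divide_right_mono) auto
  also have "Y\<^sup>2 / Y = Y" using Ypos by (simp add: power2_eq_square)
  finally have "X\<^sup>2 / Y \<le> Y" .
  then have a: "2 * (X\<^sup>2 / Y) / n \<le> 2 * Y / n" using n
    by (intro divide_right_mono mult_left_mono) auto
  have c: "4 * X\<^sup>2 / n\<^sup>2 \<le> 4 * Y\<^sup>2 / n\<^sup>2" using X2 n by (simp add: divide_right_mono)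
  have Y2: "Y\<^sup>2 = 12 * L * E\<^sup>2" unfolding Y_def using L by (simp add: power_mult_distrib)
  have "2 * Y / n + 2 * (X\<^sup>2 / Y) / n + 4 * X\<^sup>2 / n\<^sup>2 \<le> 4 * Y / n + 4 * Y\<^sup>2 / n\<^sup>2"
  proof -
    have "4 * Y / n = 2 * Y / n + 2 * Y / n" by (simp add: add_divide_distrib[symmetric])
    then show ?thesis using a c by linarith
  qed
  also have "\<dots> = 8 * sqrt 3 / n * sqrt L * E + 48 / n\<^sup>2 * L * E\<^sup>2"
    unfolding Y2 unfolding Y_def by (simp add: field_simps)
  finally show "2 * (2 * sqrt 3 * sqrt L * E) / (beta * n) * beta
          + 2 * ((1 / (2 * (2 * (2 * sqrt 3 * sqrt L * E) / (beta * n))) + beta / 2) * (4 * beta / n\<^sup>2) * (X / beta)) * (X / beta)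
         \<le> 8 * sqrt 3 / n * sqrt L * E + 48 / n\<^sup>2 * L * E\<^sup>2"
    using eq unfolding Y_def by simp
qed

context gdset begin

lemma RS_int: "t \<le> T \<Longrightarrow> (\<integral>S. RS S (W S t) \<partial>PQ) = (\<Sum>i<n. \<integral>S. f (W S t) (S i) \<partial>PQ) / real n"
  unfolding RS_def
  by (simp only: Bochner_Integration.integral_divide_zero, subst Bochner_Integration.integral_sum)
     (auto intro: fW_integrable)

end



context gdset begin

lemma main_bound:
  fixes lam :: real
  assumes lam: "lam > 0"
  shows "\<bar>\<integral>S. pop_risk D f (W S T) - emp_risk n f S (W S T) \<partial>PP\<bar>
     \<le> (lam * beta + 2 * ((1 / (2 * lam) + beta / 2) * (4 * beta / (real n)\<^sup>2) * (\<Sum>t<T. cw T t)) * (\<Sum>t<T. cw T t))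
        * (\<integral>S. emp_risk n f S W1 \<partial>PP)"
proof -
  define K2 where "K2 = (1 / (2 * lam) + beta / 2) * (4 * beta / (real n)\<^sup>2) * (\<Sum>t<T. cw T t)"
  define \<rho> where "\<rho> = (\<integral>S. RS S W1 \<partial>PQ)"
  let ?h = "\<lambda>S. f (W S T) (S n)"
  let ?ft = "\<lambda>t i S. f (W S t) (S i)"
  let ?gt = "\<lambda>t i S. f (W (sw i S) t) (S n)"
  let ?F = "\<lambda>i S. f (W (sw i S) T) (S i)"
  let ?\<Psi> = "\<lambda>i S. lam * beta * ?ft T i S + K2 * (\<Sum>t<T. cw T t * (?ft t i S + ?gt t i S))"
  have c0: "\<And>t. t \<in> {..<T} \<Longrightarrow> 0 \<le> cw T t" by (intro cw_nonneg) auto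
  have K2nn: "0 \<le> K2" unfolding K2_def using lam beta_pos c0
    by (intro mult_nonneg_nonneg sum_nonneg add_nonneg_nonneg) auto
  have ft_int: "\<And>t i. t \<le> T \<Longrightarrow> i \<le> n \<Longrightarrow> integrable PQ (?ft t i)"
    by (intro fW_integrable) auto
  have ft_meas: "\<And>t i. i \<le> n \<Longrightarrow> ?ft t i \<in> borel_measurable PQ"
    by (intro fW_meas) auto
  have gt_eq: "\<And>t i S. i < n \<Longrightarrow> ?gt t i S = ?ft t i (sw i S)"
    by (simp add: sw_i)
  have gt_int: "\<And>t i. t \<le> T \<Longrightarrow> i < n \<Longrightarrow> integrable PQ (?gt t i)"
    by (subst gt_eq, simp, rule integrable_sw, simp, rule ft_int) auto
  have gt_integral: "\<And>t i. i < n \<Longrightarrow> (\<integral>S. ?gt t i S \<partial>PQ) = (\<integral>S. ?ft t i S \<partial>PQ)"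
    by (subst gt_eq, simp, rule integral_sw, simp, rule ft_meas) auto
  have F_eq: "\<And>i S. i < n \<Longrightarrow> ?F i S = ?h (sw i S)"
    by (simp add: sw_n)
  have F_int: "\<And>i. i < n \<Longrightarrow> integrable PQ (?F i)"
    by (subst F_eq, simp, rule integrable_sw, simp, rule ft_int) auto
  have F_integral: "\<And>i. i < n \<Longrightarrow> (\<integral>S. ?F i S \<partial>PQ) = (\<integral>S. ?h S \<partial>PQ)"
    by (subst F_eq, simp, rule integral_sw, simp, rule ft_meas) auto
  have Psi_int: "\<And>i. i < n \<Longrightarrow> integrable PQ (?\<Psi> i)"
    by (intro Bochner_Integration.integrable_add Bochner_Integration.integrable_mult_right
        Bochner_Integration.integrable_sum ft_int gt_int) auto
  have RSA_loc: "\<And>S S'. (\<And>j. j < n \<Longrightarrow> S j = S' j) \<Longrightarrow> RS S (W S T) = RS S' (W S' T)"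
  proof -
    fix S S' :: "nat \<Rightarrow> 'z" assume h: "\<And>j. j < n \<Longrightarrow> S j = S' j"
    then have "W S T = W S' T" by (rule W_local)
    then show "RS S (W S T) = RS S' (W S' T)" using RS_local[OF h] by simp
  qed
  have RS1_loc: "\<And>S S'. (\<And>j. j < n \<Longrightarrow> S j = S' j) \<Longrightarrow> RS S W1 = RS S' W1"
    by (rule RS_local)
  have trA: "(\<integral>S. RS S (W S T) \<partial>PP) = (\<integral>S. RS S (W S T) \<partial>PQ)"
    "integrable PP (\<lambda>S. RS S (W S T)) \<longleftrightarrow> integrable PQ (\<lambda>S. RS S (W S T))"
    by (rule transfer_restrict[OF RS_meas RSA_loc]; simp)+
  have tr1: "(\<integral>S. RS S W1 \<partial>PP) = (\<integral>S. RS S W1 \<partial>PQ)"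
    by (rule transfer_restrict[OF RS1_meas RS1_loc]; simp)
  have RSA_int: "integrable PP (\<lambda>S. RS S (W S T))"
    using trA(2) RSW_integrable[of T] by simp
  have gen_eq: "(\<integral>S. pop_risk D f (W S T) - emp_risk n f S (W S T) \<partial>PP)
      = (\<Sum>i<n. (\<integral>S. ?F i S \<partial>PQ) - (\<integral>S. ?ft T i S \<partial>PQ)) / real n"
  proof -
    have "(\<integral>S. pop_risk D f (W S T) - emp_risk n f S (W S T) \<partial>PP)
        = (\<integral>S. pop_risk D f (W S T) \<partial>PP) - (\<integral>S. RS S (W S T) \<partial>PP)"
      unfolding RS_emp by (rule Bochner_Integration.integral_diff[OF pop_transfer(1) RSA_int])
    also have "\<dots> = (\<integral>S. ?h S \<partial>PQ) - (\<Sum>i<n. \<integral>S. ?ft T i S \<partial>PQ) / real n"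
      using pop_transfer(2) trA(1) RS_int[of T] by simp
    also have "(\<integral>S. ?h S \<partial>PQ) = (\<Sum>i<n. \<integral>S. ?F i S \<partial>PQ) / real n"
      using F_integral n_pos by simp
    finally show ?thesis by (simp add: sum_subtractf diff_divide_distrib)
  qed
  have per_i: "\<bar>(\<integral>S. ?F i S \<partial>PQ) - (\<integral>S. ?ft T i S \<partial>PQ)\<bar> \<le> (\<integral>S. ?\<Psi> i S \<partial>PQ)" if i: "i < n" for i
  proof -
    have pw: "\<bar>?F i S - ?ft T i S\<bar> \<le> ?\<Psi> i S" for S
    proof -
      have "\<bar>?F i S - ?ft T i S\<bar> \<le> lam * beta * f (W S T) (S i)
         + (1 / (2 * lam) + beta / 2) * (4 * beta / (real n)\<^sup>2 * (\<Sum>t<T. cw T t) *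
           (\<Sum>t<T. cw T t * (f (W S t) (S i) + f (W (sw i S) t) (sw i S i))))"
        by (rule pointwise[OF i _ lam]) (simp add: sw_j i)
      then show ?thesis using i by (simp add: K2_def sw_i mult.assoc)
    qed
    have "(\<integral>S. ?F i S \<partial>PQ) - (\<integral>S. ?ft T i S \<partial>PQ) = (\<integral>S. ?F i S - ?ft T i S \<partial>PQ)"
      using F_int[OF i] ft_int[of T i] i by simp
    also have "\<dots> \<le> (\<integral>S. ?\<Psi> i S \<partial>PQ)"
      using F_int[OF i] ft_int[of T i] i Psi_int[OF i] pw
      by (intro Bochner_Integration.integral_mono) (auto simp: abs_le_iff)
    finally have 1: "(\<integral>S. ?F i S \<partial>PQ) - (\<integral>S. ?ft T i S \<partial>PQ) \<le> (\<integral>S. ?\<Psi> i S \<partial>PQ)" .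
    have "(\<integral>S. ?ft T i S \<partial>PQ) - (\<integral>S. ?F i S \<partial>PQ) = (\<integral>S. ?ft T i S - ?F i S \<partial>PQ)"
      using F_int[OF i] ft_int[of T i] i by simp
    also have "\<dots> \<le> (\<integral>S. ?\<Psi> i S \<partial>PQ)"
      using F_int[OF i] ft_int[of T i] i Psi_int[OF i] pw
      by (intro Bochner_Integration.integral_mono) (auto simp: abs_le_iff)
    finally have 2: "(\<integral>S. ?ft T i S \<partial>PQ) - (\<integral>S. ?F i S \<partial>PQ) \<le> (\<integral>S. ?\<Psi> i S \<partial>PQ)" .
    from 1 2 show ?thesis by linarith
  qed
  have Psi_integral: "(\<integral>S. ?\<Psi> i S \<partial>PQ) = lam * beta * (\<integral>S. ?ft T i S \<partial>PQ)
      + 2 * K2 * (\<Sum>t<T. cw T t * (\<integral>S. ?ft t i S \<partial>PQ))" if i: "i < n" for i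
  proof -
    have "(\<integral>S. ?\<Psi> i S \<partial>PQ) = lam * beta * (\<integral>S. ?ft T i S \<partial>PQ)
        + K2 * (\<Sum>t<T. cw T t * ((\<integral>S. ?ft t i S \<partial>PQ) + (\<integral>S. ?gt t i S \<partial>PQ)))"
    proof -
      have it: "integrable PQ (\<lambda>S. cw T t * (?ft t i S + ?gt t i S))" if "t \<in> {..<T}" for t
        using that i by (intro Bochner_Integration.integrable_mult_right Bochner_Integration.integrable_add ft_int gt_int) auto
      have e1: "(\<integral>S. cw T t * (?ft t i S + ?gt t i S) \<partial>PQ) = cw T t * ((\<integral>S. ?ft t i S \<partial>PQ) + (\<integral>S. ?gt t i S \<partial>PQ))"
        if "t \<in> {..<T}" for t
        using that i ft_int[of t i] gt_int[of t i] by (simp add: Bochner_Integration.integral_add)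
      have e2: "(\<integral>S. (\<Sum>t<T. cw T t * (?ft t i S + ?gt t i S)) \<partial>PQ) = (\<Sum>t<T. cw T t * ((\<integral>S. ?ft t i S \<partial>PQ) + (\<integral>S. ?gt t i S \<partial>PQ)))"
      proof -
        have "(\<integral>S. (\<Sum>t<T. cw T t * (?ft t i S + ?gt t i S)) \<partial>PQ) = (\<Sum>t<T. (\<integral>S. cw T t * (?ft t i S + ?gt t i S) \<partial>PQ))"
          by (rule Bochner_Integration.integral_sum[of "{..<T}" PQ "\<lambda>t S. cw T t * (?ft t i S + ?gt t i S)", OF it])
        also have "\<dots> = (\<Sum>t<T. cw T t * ((\<integral>S. ?ft t i S \<partial>PQ) + (\<integral>S. ?gt t i S \<partial>PQ)))"
          by (rule sum.cong[OF refl e1])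
        finally show ?thesis .
      qed
      have i1: "integrable PQ (\<lambda>S. lam * beta * ?ft T i S)"
        using i by (intro Bochner_Integration.integrable_mult_right ft_int) auto
      have i2: "integrable PQ (\<lambda>S. K2 * (\<Sum>t<T. cw T t * (?ft t i S + ?gt t i S)))"
        using it by (intro Bochner_Integration.integrable_mult_right Bochner_Integration.integrable_sum) auto
      show ?thesis
        using Bochner_Integration.integral_add[OF i1 i2] e2 by simp
    qed
    also have "\<dots> = lam * beta * (\<integral>S. ?ft T i S \<partial>PQ) + 2 * K2 * (\<Sum>t<T. cw T t * (\<integral>S. ?ft t i S \<partial>PQ))"
      using i gt_integral by (simp add: sum_distrib_left algebra_simps)
    finally show ?thesis .
  qed
  have avg: "(\<Sum>i<n. \<integral>S. ?\<Psi> i S \<partial>PQ) / real n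
      = lam * beta * (\<integral>S. RS S (W S T) \<partial>PQ) + 2 * K2 * (\<Sum>t<T. cw T t * (\<integral>S. RS S (W S t) \<partial>PQ))"
  proof -
    have "(\<Sum>i<n. \<integral>S. ?\<Psi> i S \<partial>PQ) = (\<Sum>i<n. lam * beta * (\<integral>S. ?ft T i S \<partial>PQ)
      + 2 * K2 * (\<Sum>t<T. cw T t * (\<integral>S. ?ft t i S \<partial>PQ)))"
      using Psi_integral by simp
    also have "\<dots> = lam * beta * (\<Sum>i<n. \<integral>S. ?ft T i S \<partial>PQ) + 2 * K2 * (\<Sum>t<T. cw T t * (\<Sum>i<n. \<integral>S. ?ft t i S \<partial>PQ))"
      by (simp add: sum.distrib sum_distrib_left sum.swap[of _ "{..<n}"])
    finally have eq: "(\<Sum>i<n. \<integral>S. ?\<Psi> i S \<partial>PQ) = lam * beta * (\<Sum>i<n. \<integral>S. ?ft T i S \<partial>PQ) + 2 * K2 * (\<Sum>t<T. cw T t * (\<Sum>i<n. \<integral>S. ?ft t i S \<partial>PQ))" .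
    have r1: "(\<integral>S. RS S (W S T) \<partial>PQ) = (\<Sum>i<n. \<integral>S. ?ft T i S \<partial>PQ) / real n"
      by (rule RS_int) simp
    have "(\<Sum>t<T. cw T t * (\<integral>S. RS S (W S t) \<partial>PQ)) = (\<Sum>t<T. cw T t * (\<Sum>i<n. \<integral>S. ?ft t i S \<partial>PQ) / real n)"
      by (rule sum.cong) (auto simp: RS_int)
    also have "\<dots> = (\<Sum>t<T. cw T t * (\<Sum>i<n. \<integral>S. ?ft t i S \<partial>PQ)) / real n"
      by (simp add: sum_divide_distrib)
    finally have r2: "(\<Sum>t<T. cw T t * (\<integral>S. RS S (W S t) \<partial>PQ)) = (\<Sum>t<T. cw T t * (\<Sum>i<n. \<integral>S. ?ft t i S \<partial>PQ)) / real n" .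
    show ?thesis unfolding eq r1 r2 by (simp add: add_divide_distrib)
  qed
  have RSt_le: "(\<integral>S. RS S (W S t) \<partial>PQ) \<le> \<rho>" if "t \<le> T" for t
    unfolding \<rho>_def using that
    by (intro Bochner_Integration.integral_mono RSW_integrable RS1_integrable descent) auto
  have "\<bar>\<integral>S. pop_risk D f (W S T) - emp_risk n f S (W S T) \<partial>PP\<bar>
      \<le> (\<Sum>i<n. \<bar>(\<integral>S. ?F i S \<partial>PQ) - (\<integral>S. ?ft T i S \<partial>PQ)\<bar>) / real n"
    unfolding gen_eq using n_pos by (simp add: divide_right_mono sum_abs)
  also have "\<dots> \<le> (\<Sum>i<n. \<integral>S. ?\<Psi> i S \<partial>PQ) / real n"
    using per_i by (intro divide_right_mono sum_mono) auto
  also have "\<dots> \<le> lam * beta * \<rho> + 2 * K2 * (\<Sum>t<T. cw T t * \<rho>)"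
    unfolding avg using lam beta_pos K2nn c0 RSt_le
    by (intro add_mono mult_left_mono sum_mono) auto
  also have "\<dots> = (lam * beta + 2 * K2 * (\<Sum>t<T. cw T t)) * (\<integral>S. emp_risk n f S W1 \<partial>PP)"
    unfolding \<rho>_def RS_emp tr1 by (simp add: sum_distrib_right algebra_simps)
  finally show ?thesis unfolding K2_def .
qed

lemma final_bound:
  "\<bar>\<integral>S. pop_risk D f (W S T) - emp_risk n f S (W S T) \<partial>PP\<bar>
     \<le> (8 * sqrt 3 / real n * sqrt (ln (exp 1 * real T)) * (exp 1 * real T) powr (beta * C)
        + 48 / (real n)\<^sup>2 * ln (exp 1 * real T) * (exp 1 * real T) powr (2 * (beta * C)))
       * (\<integral>S. emp_risk n f S W1 \<partial>PP)"
proof -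
  define E where "E = (exp 1 * real T) powr (beta * C)"
  define L where "L = ln (exp 1 * real T)"
  define X where "X = (\<Prod>s<T. 1 + beta * eta (Suc s)) - 1"
  define \<rho> where "\<rho> = (\<integral>S. emp_risk n f S W1 \<partial>PP)"
  define lam where "lam = 2 * (2 * sqrt 3 * sqrt L * E) / (beta * real n)"
  have eT: "1 \<le> exp 1 * real T"
    using mult_mono[of 1 "exp 1" 1 "real T"] T_pos by simp
  have E1: "1 \<le> E" unfolding E_def
    using eT beta_pos C_nonneg by (intro ge_one_powr_ge_zero) auto
  have L1: "1 \<le> L" unfolding L_def using T_pos by (simp add: ln_mult)
  have P1: "1 \<le> (\<Prod>s<T. 1 + beta * eta (Suc s))"
    using beta_pos by (intro prod_ge_1) (auto intro!: mult_nonneg_nonneg eta_nn)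
  have X0: "0 \<le> X" unfolding X_def using P1 by simp
  have XE: "X \<le> E" unfolding X_def E_def using prod_bound by simp
  have sc: "(\<Sum>t<T. cw T t) = X / beta"
    using cw_telescope[of T] beta_pos unfolding X_def by (simp add: field_simps)
  have \<rho>0: "0 \<le> \<rho>" unfolding \<rho>_def emp_risk_def
    using f_nonneg by (intro Bochner_Integration.integral_nonneg divide_nonneg_nonneg sum_nonneg) auto
  have lam0: "lam > 0" unfolding lam_def using E1 L1 beta_pos n_pos by (intro divide_pos_pos mult_pos_pos) auto
  have E2: "(exp 1 * real T) powr (2 * (beta * C)) = E\<^sup>2"
    unfolding E_def by (simp add: power2_eq_square powr_add[symmetric] mult.commute)
  have "\<bar>\<integral>S. pop_risk D f (W S T) - emp_risk n f S (W S T) \<partial>PP\<bar>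
     \<le> (lam * beta + 2 * ((1 / (2 * lam) + beta / 2) * (4 * beta / (real n)\<^sup>2) * (X / beta)) * (X / beta)) * \<rho>"
    using main_bound[OF lam0] unfolding sc \<rho>_def .
  also have "\<dots> \<le> (8 * sqrt 3 / real n * sqrt L * E + 48 / (real n)\<^sup>2 * L * E\<^sup>2) * \<rho>"
    unfolding lam_def using final_arith[of "real n" X E L beta \<rho>] n_pos X0 XE E1 L1 beta_pos \<rho>0 by simp
  finally show ?thesis unfolding E2 unfolding E_def L_def \<rho>_def .
qed

end


theorem corollary9:
  fixes D :: "'z measure"
    and f :: "'w::euclidean_space \<Rightarrow> 'z \<Rightarrow> real"
    and G :: "'w \<Rightarrow> 'z \<Rightarrow> 'w"
    and eta :: "nat \<Rightarrow> real"
    and W1 :: 'w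
    and beta C :: real
    and n T :: nat
  assumes D: "prob_space D"
    and f_meas: "\<And>w. (\<lambda>z. f w z) \<in> borel_measurable D"
    and f_nonneg: "\<And>w z. f w z \<ge> 0"
    and grad: "\<And>w z. ((\<lambda>v. f v z) has_derivative (\<lambda>h. G w z \<bullet> h)) (at w)"
    and smooth: "\<And>w u z. norm (G w z - G u z) \<le> beta * norm (w - u)"
    and beta_pos: "beta > 0"
    and n_pos: "n > 0"
    and T_pos: "T \<ge> 1"
    and eta_nonneg: "\<And>t. 1 \<le> t \<Longrightarrow> t \<le> T + 1 \<Longrightarrow> 0 \<le> eta t"
    and eta_le: "\<And>t. 1 \<le> t \<Longrightarrow> t \<le> T + 1 \<Longrightarrow> eta t \<le> C / real t"
    and C_le: "\<And>t. 1 \<le> t \<Longrightarrow> t \<le> T + 1 \<Longrightarrow> C / real t \<le> 1 / beta"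
    and eps: "beta * C < 1"
    and integrable_init: "integrable D (\<lambda>z. f W1 z)"
  shows "\<bar>\<integral>S. pop_risk D f (gd eta G n W1 S T) - emp_risk n f S (gd eta G n W1 S T)
              \<partial>sample_measure D n\<bar>
         \<le> (8 * sqrt 3 / real n * sqrt (ln (exp 1 * real T)) * (exp 1 * real T) powr (beta * C)
            + 48 / (real n)^2 * ln (exp 1 * real T) * (exp 1 * real T) powr (2 * (beta * C)))
           * (\<integral>S. emp_risk n f S W1 \<partial>sample_measure D n)"
proof -
  interpret gdset D f G eta W1 beta C n T
    by (rule gdset.intro[OF assms])
  show ?thesis using final_bound unfolding sample_measure_def .
qed

end
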